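(* Every uncountable space $X\in\mathsf{CB_0}(\mathbf{\Sigma}^1_1)$ has cardinality of the continuum.
   Context: $\mathcal{N}=\omega^\omega$ is the Baire space. $P\omega$ is the set of all subsets of $\omega$ with the Scott topology, whose basic open sets are $\{A\subseteq\omega\mid F\subseteq A\}$ for finite $F\subseteq\omega$. For a space $Y$, $\mathbf{\Sigma}^1_1(Y)$ is the set of projections $\{y\in Y\mid\exists p\in\mathcal{N}\,(p,y)\in A\}$ of sets $A\subseteq\mathcal{N}\times Y$ whose complement is a countable union of sets $U\setminus V$ with $U,V$ open in $\mathcal{N}\times Y$. $\mathsf{CB_0}(\mathbf{\Sigma}^1_1)$ is the class of spaces homeomorphic to a subspace $S\subseteq P\omega$ with $S\in\mathbf{\Sigma}^1_1(P\omega)$. *)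

theory Defs
  imports "HOL-Analysis.Analysis" "HOL-Library.Equipollence"
begin

definition Baire_space :: "(nat \<Rightarrow> nat) topology" where
  "Baire_space = product_topology (\<lambda>_. discrete_topology (UNIV :: nat set)) UNIV"

text \<open>P omega with the Scott topology: basic opens are the sets of supersets of a finite F.\<close>
definition Pomega :: "nat set topology" where
  "Pomega = topology_generated_by {{A. F \<subseteq> A} | F. finite F}"

definition Sigma11 :: "'a topology \<Rightarrow> 'a set set" where
  "Sigma11 Y = {S. \<exists>A U V.
      A \<subseteq> topspace Baire_space \<times> topspace Y \<and>
      (\<forall>n::nat. openin (prod_topology Baire_space Y) (U n) \<and>
                openin (prod_topology Baire_space Y) (V n)) \<and>
      (topspace Baire_space \<times> topspace Y) - A = (\<Union>n. U n - V n) \<and>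
      S = {y \<in> topspace Y. \<exists>p \<in> topspace Baire_space. (p, y) \<in> A}}"

definition CB0_Sigma11 :: "'a topology \<Rightarrow> bool" where
  "CB0_Sigma11 X \<longleftrightarrow> (\<exists>S. S \<subseteq> topspace Pomega \<and> S \<in> Sigma11 Pomega \<and>
                          X homeomorphic_space subtopology Pomega S)"

end

theory Submission
  imports Defs
begin

type_synonym pt = "(nat \<Rightarrow> nat) \<times> nat set"

definition agree :: "nat \<Rightarrow> pt \<Rightarrow> pt \<Rightarrow> bool" where
  "agree m z w \<longleftrightarrow> (\<forall>i<m. fst z i = fst w i \<and> (i \<in> snd z \<longleftrightarrow> i \<in> snd w))"

definition cell :: "nat \<Rightarrow> pt \<Rightarrow> pt set" where
  "cell m c = {w. agree m c w}"

definition cop :: "pt set \<Rightarrow> bool" where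
  "cop U \<longleftrightarrow> (\<forall>z\<in>U. \<exists>m. cell m z \<subseteq> U)"

lemma agree_refl[simp]: "agree m z z" by (simp add: agree_def)
lemma agree_sym: "agree m z w \<Longrightarrow> agree m w z" by (auto simp: agree_def)
lemma agree_trans: "agree m z w \<Longrightarrow> agree m w u \<Longrightarrow> agree m z u" by (auto simp: agree_def)
lemma agree_mono: "agree m z w \<Longrightarrow> k \<le> m \<Longrightarrow> agree k z w" by (auto simp: agree_def)

lemma Pomega_open_aux:
  fixes U :: "nat set set"
  assumes "generate_topology_on {{A. F \<subseteq> A} | F. finite F} U"
  shows "\<forall>y\<in>U. \<exists>m. \<forall>y'. (\<forall>i<m. i \<in> y \<longleftrightarrow> i \<in> y') \<longrightarrow> y' \<in> U"
  using assms
proof induction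
  case Empty then show ?case by simp
next
  case (Int a b)
  show ?case
  proof
    fix y assume y: "y \<in> a \<inter> b"
    have ya: "y \<in> a" and yb: "y \<in> b" using y by auto
    obtain m1 where m1: "\<forall>y'. (\<forall>i<m1. i \<in> y \<longleftrightarrow> i \<in> y') \<longrightarrow> y' \<in> a"
      using Int.IH(1) ya by (elim ballE exE) auto
    obtain m2 where m2: "\<forall>y'. (\<forall>i<m2. i \<in> y \<longleftrightarrow> i \<in> y') \<longrightarrow> y' \<in> b"
      using Int.IH(2) yb by (elim ballE exE) auto
    show "\<exists>m. \<forall>y'. (\<forall>i<m. i \<in> y \<longleftrightarrow> i \<in> y') \<longrightarrow> y' \<in> a \<inter> b"
    proof (intro exI[of _ "max m1 m2"] allI impI)
      fix y' assume h: "\<forall>i<max m1 m2. i \<in> y \<longleftrightarrow> i \<in> y'"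
      have "\<forall>i<m1. i \<in> y \<longleftrightarrow> i \<in> y'"
      proof (intro allI impI)
        fix i assume "i < m1" then have "i < max m1 m2" by simp
        then show "i \<in> y \<longleftrightarrow> i \<in> y'" using h by blast
      qed
      then have "y' \<in> a" using m1 by blast
      moreover have "\<forall>i<m2. i \<in> y \<longleftrightarrow> i \<in> y'"
      proof (intro allI impI)
        fix i assume "i < m2" then have "i < max m1 m2" by simp
        then show "i \<in> y \<longleftrightarrow> i \<in> y'" using h by blast
      qed
      then have "y' \<in> b" using m2 by blast
      ultimately show "y' \<in> a \<inter> b" by blast
    qed
  qed
next
  case (UN K)
  show ?case
  proof
    fix y assume "y \<in> \<Union>K"
    then obtain k where k: "k \<in> K" "y \<in> k" by blast
    then obtain m where "\<forall>y'. (\<forall>i<m. i \<in> y \<longleftrightarrow> i \<in> y') \<longrightarrow> y' \<in> k" using UN.IH by blast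
    then show "\<exists>m. \<forall>y'. (\<forall>i<m. i \<in> y \<longleftrightarrow> i \<in> y') \<longrightarrow> y' \<in> \<Union>K" using k by blast
  qed
next
  case (Basis s)
  then obtain F where F: "finite F" "s = {A. F \<subseteq> A}" by blast
  show ?case
  proof
    fix y assume y: "y \<in> s"
    obtain m where "F \<subseteq> {..<m}" using F(1) finite_nat_bounded by blast
    then show "\<exists>m. \<forall>y'. (\<forall>i<m. i \<in> y \<longleftrightarrow> i \<in> y') \<longrightarrow> y' \<in> s"
      using y F by (intro exI[of _ m]) auto
  qed
qed

lemma Pomega_open:
  "openin Pomega U \<Longrightarrow> y \<in> U \<Longrightarrow> \<exists>m. \<forall>y'. (\<forall>i<m. i \<in> y \<longleftrightarrow> i \<in> y') \<longrightarrow> y' \<in> U"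
  unfolding Pomega_def openin_topology_generated_by_iff using Pomega_open_aux by blast

lemma Baire_open:
  assumes "openin Baire_space U" "p \<in> U"
  shows "\<exists>m. \<forall>p'. (\<forall>i<m. p i = p' i) \<longrightarrow> p' \<in> U"
proof -
  obtain W where W: "finite {i \<in> UNIV. W i \<noteq> topspace (discrete_topology (UNIV::nat set))}"
    "p \<in> Pi\<^sub>E UNIV W" "Pi\<^sub>E UNIV W \<subseteq> U"
    using assms unfolding Baire_space_def openin_product_topology_alt by blast
  have fin: "finite {i. W i \<noteq> UNIV}" using W(1) by simp
  obtain m where m: "\<And>i. W i \<noteq> UNIV \<Longrightarrow> i < m"
  proof -
    obtain m where "{i. W i \<noteq> UNIV} \<subseteq> {..<m}" using fin finite_nat_bounded by blast
    then show ?thesis using that by blast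
  qed
  show ?thesis
  proof (intro exI allI impI)
    fix p' assume a: "\<forall>i<m. p i = p' i"
    have "p' i \<in> W i" for i
    proof (cases "W i = UNIV")
      case False
      then have "i < m" by (rule m)
      then have "p' i = p i" using a by simp
      moreover have "p i \<in> W i" using W(2) by (simp add: PiE_iff)
      ultimately show ?thesis by simp
    qed simp
    then have "p' \<in> Pi\<^sub>E UNIV W" by (simp add: PiE_iff)
    then show "p' \<in> U" using W(3) by blast
  qed
qed

lemma prod_open_cop:
  assumes "openin (prod_topology Baire_space Pomega) U"
  shows "cop U"
  unfolding cop_def
proof
  fix z assume zU: "z \<in> U"
  obtain p y where z: "z = (p,y)" by (cases z)
  with zU have "(p,y) \<in> U" by simp
  then obtain P Y where PY: "openin Baire_space P" "openin Pomega Y" "p \<in> P" "y \<in> Y" "P \<times> Y \<subseteq> U"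
  proof -
    have "\<forall>x y. (x,y) \<in> U \<longrightarrow> (\<exists>P Y. openin Baire_space P \<and> openin Pomega Y \<and> x \<in> P \<and> y \<in> Y \<and> P \<times> Y \<subseteq> U)"
      using assms by (simp only: openin_prod_topology_alt)
    then show ?thesis using that \<open>(p,y) \<in> U\<close> by blast
  qed
  obtain m1 where m1: "\<forall>p'. (\<forall>i<m1. p i = p' i) \<longrightarrow> p' \<in> P" using Baire_open[OF PY(1,3)] by blast
  obtain m2 where m2: "\<forall>y'. (\<forall>i<m2. i \<in> y \<longleftrightarrow> i \<in> y') \<longrightarrow> y' \<in> Y" using Pomega_open[OF PY(2,4)] by blast
  show "\<exists>m. cell m z \<subseteq> U"
  proof (intro exI[of _ "max m1 m2"] subsetI)
    fix w assume "w \<in> cell (max m1 m2) z"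
    then have ag: "agree (max m1 m2) z w" by (simp add: cell_def)
    have "\<forall>i<m1. p i = fst w i"
    proof (intro allI impI)
      fix i assume "i < m1" then have "i < max m1 m2" by simp
      then show "p i = fst w i" using ag z unfolding agree_def by simp
    qed
    then have "fst w \<in> P" using m1 by blast
    moreover have "\<forall>i<m2. i \<in> y \<longleftrightarrow> i \<in> snd w"
    proof (intro allI impI)
      fix i assume "i < m2" then have "i < max m1 m2" by simp
      then show "i \<in> y \<longleftrightarrow> i \<in> snd w" using ag z unfolding agree_def by simp
    qed
    then have "snd w \<in> Y" using m2 by blast
    ultimately have "w \<in> P \<times> Y" by (simp add: mem_Times_iff)
    then show "w \<in> U" using PY(5) by blast
  qed
qed


lemma cell_sub: "agree m c c' \<Longrightarrow> m \<le> m' \<Longrightarrow> cell m' c' \<subseteq> cell m c"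
  unfolding cell_def by (auto intro: agree_trans agree_mono)

lemma countable_cells: "\<exists>R. countable R \<and> (\<forall>z. \<exists>c\<in>R. agree m c z)"
proof -
  define g :: "nat list \<times> nat set \<Rightarrow> pt" where
    "g = (\<lambda>(xs,F). (\<lambda>i. if i < m then xs ! i else 0, F))"
  define R where "R = g ` (UNIV \<times> {F. finite F})"
  have "countable ((UNIV :: nat list set) \<times> {F::nat set. finite F})"
    by (rule countable_SIGMA) (auto simp: countable_Collect_finite)
  then have "countable R" unfolding R_def by (rule countable_image)
  moreover have "\<exists>c\<in>R. agree m c z" for z
  proof
    show "g (map (fst z) [0..<m], snd z \<inter> {..<m}) \<in> R" unfolding R_def by auto
    show "agree m (g (map (fst z) [0..<m], snd z \<inter> {..<m})) z"
      unfolding agree_def g_def by auto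
  qed
  ultimately show ?thesis by blast
qed

lemma uncountable_cover:
  assumes "uncountable (snd ` W)" "W \<subseteq> (\<Union>i\<in>I. X i)" "countable I"
  shows "\<exists>i\<in>I. uncountable (snd ` (W \<inter> X i))"
proof (rule ccontr)
  assume "\<not> ?thesis"
  then have ci: "\<forall>i\<in>I. countable (snd ` (W \<inter> X i))" by blast
  have "countable (\<Union>i\<in>I. snd ` (W \<inter> X i))" by (rule countable_UN[OF assms(3)]) (use ci in blast)
  moreover have "snd ` W \<subseteq> (\<Union>i\<in>I. snd ` (W \<inter> X i))" using assms(2) by blast
  ultimately show False using assms(1) countable_subset by blast
qed

lemma L1: "uncountable (snd ` W) \<Longrightarrow> \<exists>c. uncountable (snd ` (W \<inter> cell m c))"
proof -
  assume u: "uncountable (snd ` W)"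
  obtain R where R: "countable R" "\<forall>z. \<exists>c\<in>R. agree m c z" using countable_cells by blast
  have "W \<subseteq> (\<Union>c\<in>R. cell m c)" using R(2) unfolding cell_def by blast
  then show ?thesis using uncountable_cover[OF u _ R(1)] by blast
qed

lemma uncountable_nonempty:
  assumes "uncountable (snd ` W)" shows "\<exists>z. z \<in> W"
proof (rule ccontr)
  assume "\<not> (\<exists>z. z \<in> W)"
  then have "W = {}" by blast
  then have "snd ` W = {}" by simp
  then show False using assms by (metis countable_empty)
qed

lemma L0:
  assumes "uncountable (snd ` (W \<inter> cell m c))" "m \<le> m'"
  shows "\<exists>c'. agree m c c' \<and> uncountable (snd ` (W \<inter> cell m' c'))"
proof -
  obtain c' where c': "uncountable (snd ` ((W \<inter> cell m c) \<inter> cell m' c'))" using L1[OF assms(1)] by blast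
  then obtain z where z: "z \<in> (W \<inter> cell m c) \<inter> cell m' c'" using uncountable_nonempty by blast
  then have "agree m c z" "agree m' c' z" by (auto simp: cell_def)
  then have "agree m c' z" using assms(2) agree_mono by blast
  then have "agree m c c'" using \<open>agree m c z\<close> agree_sym agree_trans by blast
  moreover have "uncountable (snd ` (W \<inter> cell m' c'))"
  proof
    assume "countable (snd ` (W \<inter> cell m' c'))"
    moreover have "snd ` ((W \<inter> cell m c) \<inter> cell m' c') \<subseteq> snd ` (W \<inter> cell m' c')" by blast
    ultimately show False using c' countable_subset by blast
  qed
  ultimately show ?thesis by blast
qed

lemma split_Y:
  fixes Y :: "nat set set"
  assumes "uncountable Y"
  shows "\<exists>k a1 a2. a1 \<noteq> a2 \<and> uncountable {y\<in>Y. y \<inter> {..<k} = a1} \<and> uncountable {y\<in>Y. y \<inter> {..<k} = a2}"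
proof (rule ccontr)
  define pc where "pc k a = {y\<in>Y. y \<inter> {..<k} = a}" for k a
  assume nt: "\<not> ?thesis"
  have uniq: "a = b" if ua: "uncountable (pc k a)" and ub: "uncountable (pc k b)" for k a b
  proof (rule ccontr)
    assume "a \<noteq> b"
    then have "\<exists>k a1 a2. a1 \<noteq> a2 \<and> uncountable {y\<in>Y. y \<inter> {..<k} = a1} \<and> uncountable {y\<in>Y. y \<inter> {..<k} = a2}"
      using ua ub unfolding pc_def by (intro exI[of _ k] exI[of _ a] exI[of _ b]) simp
    then show False using nt by (rule notE[rotated])
  qed
  define ak where "ak k = (SOME a. uncountable (pc k a))" for k
  have ak: "a = ak k" if "uncountable (pc k a)" for k a
  proof -
    have "uncountable (pc k (ak k))" unfolding ak_def using that by (rule someI)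
    then show ?thesis using uniq[OF that] by blast
  qed
  define ys where "ys = {i. i \<in> ak (Suc i)}"
  define D where "D = (\<Union>k. \<Union>a\<in>{a. a \<subseteq> {..<k} \<and> countable (pc k a)}. pc k a)"
  have cD: "countable D" unfolding D_def
  proof (rule countable_UN[OF countableI_type])
    fix k
    have "finite {a. a \<subseteq> {..<k::nat} \<and> countable (pc k a)}" by (rule finite_subset[of _ "Pow {..<k}"]) auto
    then have "countable {a. a \<subseteq> {..<k} \<and> countable (pc k a)}" by (rule countable_finite)
    then show "countable (\<Union>a\<in>{a. a \<subseteq> {..<k} \<and> countable (pc k a)}. pc k a)"
      by (rule countable_UN) blast
  qed
  have subY: "Y \<subseteq> insert ys D"
  proof
    fix y assume yY: "y \<in> Y"
    show "y \<in> insert ys D"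
    proof (cases "y = ys")
      case False
      have "\<exists>i. (i \<in> y) \<noteq> (i \<in> ys)"
      proof (rule ccontr)
        assume "\<not> (\<exists>i. (i \<in> y) \<noteq> (i \<in> ys))"
        then have "y = ys" by (intro set_eqI) blast
        then show False using False by simp
      qed
      then obtain i where i: "(i \<in> y) \<noteq> (i \<in> ys)" by blast
      define a where "a = y \<inter> {..<Suc i}"
      have ypc: "y \<in> pc (Suc i) a" unfolding pc_def a_def using yY by simp
      show ?thesis
      proof (cases "countable (pc (Suc i) a)")
        case True
        have "a \<subseteq> {..<Suc i}" unfolding a_def by simp
        then have "a \<in> {a. a \<subseteq> {..<Suc i} \<and> countable (pc (Suc i) a)}" using True by simp
        then have "y \<in> D" unfolding D_def using ypc by blast
        then show ?thesis by simp
      next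
        case False
        then have "a = ak (Suc i)" by (rule ak)
        then have "(i \<in> y \<inter> {..<Suc i}) = (i \<in> ak (Suc i))" unfolding a_def by simp
        then have "(i \<in> y) = (i \<in> ys)" unfolding ys_def by simp
        then show ?thesis using i by blast
      qed
    qed simp
  qed
  have "countable (insert ys D)" using cD by simp
  then have "countable Y" using subY by (rule countable_subset[rotated])
  then show False using assms by simp
qed

definition KJ :: "(nat \<Rightarrow> pt set) \<Rightarrow> nat set \<Rightarrow> pt set" where
  "KJ U J = {z. \<forall>j\<in>J. z \<notin> U j}"

type_synonym st = "nat \<times> pt \<times> nat set"

definition cellS :: "st \<Rightarrow> pt set" where
  "cellS \<sigma> = cell (fst \<sigma>) (fst (snd \<sigma>))"

definition leS :: "st \<Rightarrow> st \<Rightarrow> bool" where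
  "leS \<sigma>' \<sigma> \<longleftrightarrow> fst \<sigma> \<le> fst \<sigma>' \<and> agree (fst \<sigma>) (fst (snd \<sigma>)) (fst (snd \<sigma>')) \<and> snd (snd \<sigma>) \<subseteq> snd (snd \<sigma>')"

lemma leS_refl: "leS \<sigma> \<sigma>" by (simp add: leS_def)
lemma leS_trans: "leS \<sigma>3 \<sigma>2 \<Longrightarrow> leS \<sigma>2 \<sigma>1 \<Longrightarrow> leS \<sigma>3 \<sigma>1"
proof -
  assume a: "leS \<sigma>3 \<sigma>2" "leS \<sigma>2 \<sigma>1"
  have "agree (fst \<sigma>1) (fst (snd \<sigma>2)) (fst (snd \<sigma>3))" using a agree_mono unfolding leS_def by blast
  then show ?thesis using a agree_trans order_trans unfolding leS_def by blast
qed
lemma leS_cell: "leS \<sigma>' \<sigma> \<Longrightarrow> cellS \<sigma>' \<subseteq> cellS \<sigma>"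
  unfolding leS_def cellS_def using cell_sub by blast

locale perf =
  fixes U V :: "nat \<Rightarrow> pt set" and A :: "pt set"
  assumes cU: "\<And>n. cop (U n)" and cV: "\<And>n. cop (V n)"
    and Aeq: "A = - (\<Union>n. U n - V n)" and unc: "uncountable (snd ` A)"
begin

definition goodS :: "st \<Rightarrow> bool" where
  "goodS \<sigma> \<longleftrightarrow> uncountable (snd ` (A \<inter> KJ U (snd (snd \<sigma>)) \<inter> cellS \<sigma>))"

lemma L2:
  assumes "goodS \<sigma>"
  shows "\<exists>\<sigma>'. goodS \<sigma>' \<and> leS \<sigma>' \<sigma> \<and> (cellS \<sigma>' \<subseteq> V n \<or> n \<in> snd (snd \<sigma>')) \<and> n < fst \<sigma>'"
proof -
  obtain m c J where \<sigma>: "\<sigma> = (m,c,J)" by (cases \<sigma>) auto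
  define W where "W = A \<inter> KJ U J"
  have g: "uncountable (snd ` (W \<inter> cell m c))" using assms unfolding goodS_def W_def \<sigma> cellS_def by simp
  show ?thesis
  proof (cases "countable (snd ` (W \<inter> cell m c \<inter> V n))")
    case False
    have "\<forall>M. \<exists>R. countable R \<and> (\<forall>z. \<exists>c\<in>R. agree M c z)" using countable_cells by blast
    then obtain R where R0: "\<forall>M. countable (R M) \<and> (\<forall>z. \<exists>c\<in>R M. agree M c z)"
      using choice[of "\<lambda>M R. countable R \<and> (\<forall>z. \<exists>c\<in>R. agree M c z)"] by blast
    have R: "\<And>M. countable (R M)" "\<And>M z. \<exists>d\<in>R M. agree M d z" using R0 by blast+
    define I where "I = {(M,d). d \<in> R M \<and> cell M d \<subseteq> V n}"
    have cI: "countable I"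
    proof (rule countable_subset)
      show "I \<subseteq> (SIGMA M:UNIV. R M)" unfolding I_def by auto
      show "countable (SIGMA M:UNIV. R M)" using R(1) by (intro countable_SIGMA) auto
    qed
    have cov: "W \<inter> cell m c \<inter> V n \<subseteq> (\<Union>i\<in>I. cell (fst i) (snd i))"
    proof
      fix z assume z: "z \<in> W \<inter> cell m c \<inter> V n"
      then obtain M where M: "cell M z \<subseteq> V n" using cV unfolding cop_def by blast
      obtain d where d: "d \<in> R M" "agree M d z" using R(2) by blast
      have "cell M d \<subseteq> cell M z" unfolding cell_def using d(2) agree_sym agree_trans by blast
      then have "(M,d) \<in> I" unfolding I_def using M d(1) by auto
      moreover have "z \<in> cell M d" using d(2) by (simp add: cell_def)
      ultimately show "z \<in> (\<Union>i\<in>I. cell (fst i) (snd i))" by (intro UN_I[of "(M,d)"]) simp_all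
    qed
    obtain i where i: "i \<in> I" "uncountable (snd ` ((W \<inter> cell m c \<inter> V n) \<inter> cell (fst i) (snd i)))"
      using uncountable_cover[OF False cov cI] by blast
    obtain M d where Md: "i = (M,d)" by (cases i)
    have dV: "cell M d \<subseteq> V n" using i(1) Md unfolding I_def by auto
    define W' where "W' = W \<inter> V n \<inter> cell M d"
    define m' where "m' = max (max m M) (Suc n)"
    have "(W \<inter> cell m c \<inter> V n) \<inter> cell (fst i) (snd i) = W' \<inter> cell m c"
      unfolding W'_def Md by auto
    then have "snd ` ((W \<inter> cell m c \<inter> V n) \<inter> cell (fst i) (snd i)) = snd ` (W' \<inter> cell m c)"
      by simp
    then have u: "uncountable (snd ` (W' \<inter> cell m c))" using i(2) by simp
    have mm': "m \<le> m'" unfolding m'_def by simp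
    obtain c' where c': "agree m c c'" "uncountable (snd ` (W' \<inter> cell m' c'))"
      using L0[OF u mm'] by blast
    obtain z1 where z1: "z1 \<in> W' \<inter> cell m' c'" using uncountable_nonempty[OF c'(2)] by blast
    have "agree M d z1" "agree m' c' z1" using z1 unfolding W'_def cell_def by auto
    have Mm: "M \<le> m'" unfolding m'_def by simp
    have "agree M c' z1" using \<open>agree m' c' z1\<close> Mm agree_mono by blast
    then have "agree M d c'" using \<open>agree M d z1\<close> agree_sym agree_trans by blast
    then have "cell m' c' \<subseteq> cell M d" using cell_sub Mm by blast
    then have sub: "cell m' c' \<subseteq> V n" using dV by blast
    have "goodS (m',c',J)"
    proof -
      have "snd ` (W' \<inter> cell m' c') \<subseteq> snd ` (A \<inter> KJ U J \<inter> cell m' c')" unfolding W'_def W_def by blast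
      then have "uncountable (snd ` (A \<inter> KJ U J \<inter> cell m' c'))" using c'(2) countable_subset by blast
      then show ?thesis unfolding goodS_def cellS_def by simp
    qed
    moreover have "leS (m',c',J) \<sigma>" unfolding leS_def \<sigma> m'_def using c'(1) by auto
    moreover have "cellS (m',c',J) \<subseteq> V n" unfolding cellS_def using sub by simp
    moreover have "n < fst (m',c',J)" unfolding m'_def by simp
    ultimately show ?thesis by blast
  next
    case True
    define W' where "W' = A \<inter> KJ U (insert n J)"
    define m' where "m' = max m (Suc n)"
    have "snd ` (W \<inter> cell m c) \<subseteq> snd ` (W \<inter> cell m c \<inter> V n) \<union> snd ` (W' \<inter> cell m c)"
    proof
      fix y assume "y \<in> snd ` (W \<inter> cell m c)"
      then obtain z where z: "z \<in> W \<inter> cell m c" "y = snd z" by blast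
      show "y \<in> snd ` (W \<inter> cell m c \<inter> V n) \<union> snd ` (W' \<inter> cell m c)"
      proof (cases "z \<in> V n")
        case True then show ?thesis using z by blast
      next
        case False
        have "z \<in> A" using z(1) W_def by blast
        then have "z \<notin> (\<Union>n. U n - V n)" by (simp add: Aeq)
        then have "z \<notin> U n - V n" by blast
        then have "z \<notin> U n" using False by blast
        then have "z \<in> W' \<inter> cell m c" using z(1) unfolding W_def W'_def KJ_def by blast
        then show ?thesis using z(2) by blast
      qed
    qed
    then have u: "uncountable (snd ` (W' \<inter> cell m c))"
    proof -
      assume sub: "snd ` (W \<inter> cell m c) \<subseteq> snd ` (W \<inter> cell m c \<inter> V n) \<union> snd ` (W' \<inter> cell m c)"
      show ?thesis
      proof
        assume "countable (snd ` (W' \<inter> cell m c))"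
        then have "countable (snd ` (W \<inter> cell m c \<inter> V n) \<union> snd ` (W' \<inter> cell m c))" using True by simp
        then have "countable (snd ` (W \<inter> cell m c))" using sub by (rule countable_subset[rotated])
        then show False using g by simp
      qed
    qed
    have mm': "m \<le> m'" unfolding m'_def by simp
    obtain c' where c': "agree m c c'" "uncountable (snd ` (W' \<inter> cell m' c'))"
      using L0[OF u mm'] by blast
    have "goodS (m',c',insert n J)" unfolding goodS_def cellS_def using c'(2) W'_def by simp
    moreover have "leS (m',c',insert n J) \<sigma>" unfolding leS_def \<sigma> m'_def using c'(1) by auto
    moreover have "n < fst (m',c',insert n J)" unfolding m'_def by simp
    ultimately show ?thesis by (intro exI[of _ "(m',c',insert n J)"]) simp
  qed
qed


lemma L3:
  assumes "goodS \<sigma>"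
  shows "\<exists>\<sigma>1 \<sigma>2 k. goodS \<sigma>1 \<and> goodS \<sigma>2 \<and> leS \<sigma>1 \<sigma> \<and> leS \<sigma>2 \<sigma> \<and> k < fst \<sigma>1 \<and> k < fst \<sigma>2 \<and>
     (k \<in> snd (fst (snd \<sigma>1))) \<noteq> (k \<in> snd (fst (snd \<sigma>2)))"
proof -
  obtain m c J where \<sigma>: "\<sigma> = (m,c,J)" by (cases \<sigma>) auto
  define W where "W = A \<inter> KJ U J"
  have g: "uncountable (snd ` (W \<inter> cell m c))" using assms unfolding goodS_def W_def \<sigma> cellS_def by simp
  obtain k0 a1 a2 where a: "a1 \<noteq> a2" "uncountable {y\<in>snd ` (W \<inter> cell m c). y \<inter> {..<k0} = a1}"
     "uncountable {y\<in>snd ` (W \<inter> cell m c). y \<inter> {..<k0} = a2}"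
    using split_Y[OF g] by blast
  obtain i where i: "(i \<in> a1) \<noteq> (i \<in> a2)" using a(1) by blast
  have ne: "\<exists>y. y \<inter> {..<k0} = a" if "uncountable {y\<in>snd ` (W \<inter> cell m c). y \<inter> {..<k0} = a}" for a
  proof (rule ccontr)
    assume "\<not> ?thesis"
    then have "{y\<in>snd ` (W \<inter> cell m c). y \<inter> {..<k0} = a} = {}" by blast
    then show False using that by (metis countable_empty)
  qed
  obtain y1 y2 where y: "y1 \<inter> {..<k0} = a1" "y2 \<inter> {..<k0} = a2" using ne[OF a(2)] ne[OF a(3)] by blast
  have ik: "i < k0"
  proof (cases "i \<in> a1")
    case True then show ?thesis using y(1) by blast
  next
    case False then have "i \<in> a2" using i by blast
    then show ?thesis using y(2) by blast
  qed
  define m' where "m' = max m k0"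
  have child: "\<exists>c'. agree m c c' \<and> uncountable (snd ` (W \<inter> cell m' c')) \<and> (i \<in> snd c' \<longleftrightarrow> i \<in> a)"
    if u: "uncountable {y\<in>snd ` (W \<inter> cell m c). y \<inter> {..<k0} = a}" for a
  proof -
    define Wa where "Wa = W \<inter> {z. snd z \<inter> {..<k0} = a}"
    have "{y\<in>snd ` (W \<inter> cell m c). y \<inter> {..<k0} = a} \<subseteq> snd ` (Wa \<inter> cell m c)" unfolding Wa_def by auto
    then have "uncountable (snd ` (Wa \<inter> cell m c))" using u by (meson countable_subset)
    moreover have "m \<le> m'" unfolding m'_def by simp
    ultimately obtain c' where c': "agree m c c'" "uncountable (snd ` (Wa \<inter> cell m' c'))"
      using L0[of Wa m c m'] by blast
    obtain z where z: "z \<in> Wa \<inter> cell m' c'" using uncountable_nonempty[OF c'(2)] by blast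
    have "i < m'" using ik unfolding m'_def by simp
    then have "i \<in> snd c' \<longleftrightarrow> i \<in> snd z" using z unfolding cell_def agree_def by auto
    also have "\<dots> \<longleftrightarrow> i \<in> a" using z ik unfolding Wa_def by auto
    finally have "i \<in> snd c' \<longleftrightarrow> i \<in> a" .
    moreover have "snd ` (Wa \<inter> cell m' c') \<subseteq> snd ` (W \<inter> cell m' c')" unfolding Wa_def by blast
    then have "uncountable (snd ` (W \<inter> cell m' c'))" using c'(2) by (meson countable_subset)
    ultimately show ?thesis using c'(1) by blast
  qed
  obtain c1 where c1: "agree m c c1" "uncountable (snd ` (W \<inter> cell m' c1))" "i \<in> snd c1 \<longleftrightarrow> i \<in> a1"
    using child[OF a(2)] by blast
  obtain c2 where c2: "agree m c c2" "uncountable (snd ` (W \<inter> cell m' c2))" "i \<in> snd c2 \<longleftrightarrow> i \<in> a2"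
    using child[OF a(3)] by blast
  have "goodS (m',c1,J)" "goodS (m',c2,J)" unfolding goodS_def cellS_def using c1(2) c2(2) W_def by simp_all
  moreover have "leS (m',c1,J) \<sigma>" "leS (m',c2,J) \<sigma>" unfolding leS_def \<sigma> m'_def using c1(1) c2(1) by auto
  moreover have "i < fst (m',c1,J)" "i < fst (m',c2,J)" using ik unfolding m'_def by auto
  moreover have "(i \<in> snd (fst (snd (m',c1,J)))) \<noteq> (i \<in> snd (fst (snd (m',c2,J))))" using c1(3) c2(3) i by simp
  ultimately show ?thesis by blast
qed

definition refine :: "nat \<Rightarrow> st \<Rightarrow> st" where
  "refine n \<sigma> = (SOME \<sigma>'. goodS \<sigma>' \<and> leS \<sigma>' \<sigma> \<and> (cellS \<sigma>' \<subseteq> V n \<or> n \<in> snd (snd \<sigma>')) \<and> n < fst \<sigma>')"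

definition splitP :: "st \<Rightarrow> st \<Rightarrow> st \<Rightarrow> bool" where
  "splitP \<sigma> \<sigma>1 \<sigma>2 \<longleftrightarrow> (\<exists>k. goodS \<sigma>1 \<and> goodS \<sigma>2 \<and> leS \<sigma>1 \<sigma> \<and> leS \<sigma>2 \<sigma> \<and> k < fst \<sigma>1 \<and> k < fst \<sigma>2 \<and>
     (k \<in> snd (fst (snd \<sigma>1))) \<noteq> (k \<in> snd (fst (snd \<sigma>2))))"

definition spl :: "st \<Rightarrow> st \<times> st" where
  "spl \<sigma> = (SOME p. splitP \<sigma> (fst p) (snd p))"

definition child :: "bool \<Rightarrow> nat \<Rightarrow> st \<Rightarrow> st" where
  "child b n \<sigma> = (if b then fst (spl (refine n \<sigma>)) else snd (spl (refine n \<sigma>)))"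

lemma refine_props:
  assumes "goodS \<sigma>"
  shows "goodS (refine n \<sigma>) \<and> leS (refine n \<sigma>) \<sigma> \<and> (cellS (refine n \<sigma>) \<subseteq> V n \<or> n \<in> snd (snd (refine n \<sigma>))) \<and> n < fst (refine n \<sigma>)"
  unfolding refine_def by (rule someI_ex) (rule L2[OF assms])

lemma spl_props:
  assumes "goodS \<sigma>"
  shows "splitP \<sigma> (fst (spl \<sigma>)) (snd (spl \<sigma>))"
proof -
  have "\<exists>p. splitP \<sigma> (fst p) (snd p)"
  proof -
    obtain \<sigma>1 \<sigma>2 where "splitP \<sigma> \<sigma>1 \<sigma>2" using L3[OF assms] unfolding splitP_def by blast
    then show ?thesis by (intro exI[of _ "(\<sigma>1,\<sigma>2)"]) simp
  qed
  then show ?thesis unfolding spl_def by (rule someI_ex)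
qed

lemma child_props:
  assumes "goodS \<sigma>"
  shows "goodS (child b n \<sigma>) \<and> leS (child b n \<sigma>) \<sigma> \<and> (cellS (child b n \<sigma>) \<subseteq> V n \<or> n \<in> snd (snd (child b n \<sigma>))) \<and> n < fst (child b n \<sigma>)"
proof -
  define \<rho> where "\<rho> = refine n \<sigma>"
  have r: "goodS \<rho>" "leS \<rho> \<sigma>" "cellS \<rho> \<subseteq> V n \<or> n \<in> snd (snd \<rho>)" "n < fst \<rho>"
    using refine_props[OF assms, of n] unfolding \<rho>_def by auto
  have sp: "splitP \<rho> (fst (spl \<rho>)) (snd (spl \<rho>))" by (rule spl_props[OF r(1)])
  define \<tau> where "\<tau> = child b n \<sigma>"
  have t: "\<tau> = fst (spl \<rho>) \<or> \<tau> = snd (spl \<rho>)" unfolding \<tau>_def child_def \<rho>_def by simp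
  have "goodS \<tau>" "leS \<tau> \<rho>" using t sp unfolding splitP_def by auto
  moreover have "leS \<tau> \<sigma>" using leS_trans \<open>leS \<tau> \<rho>\<close> r(2) by blast
  moreover have "cellS \<tau> \<subseteq> V n \<or> n \<in> snd (snd \<tau>)"
    using r(3) leS_cell[OF \<open>leS \<tau> \<rho>\<close>] \<open>leS \<tau> \<rho>\<close> unfolding leS_def by blast
  moreover have "n < fst \<tau>" using r(4) \<open>leS \<tau> \<rho>\<close> unfolding leS_def by simp
  ultimately show ?thesis unfolding \<tau>_def by blast
qed

lemma child_sep:
  assumes "goodS \<sigma>" "b \<noteq> b'"
  shows "\<exists>k. k < fst (child b n \<sigma>) \<and> k < fst (child b' n \<sigma>) \<and>
    (k \<in> snd (fst (snd (child b n \<sigma>)))) \<noteq> (k \<in> snd (fst (snd (child b' n \<sigma>))))"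
proof -
  define \<rho> where "\<rho> = refine n \<sigma>"
  have "goodS \<rho>" using refine_props[OF assms(1), of n] unfolding \<rho>_def by auto
  then have sp: "splitP \<rho> (fst (spl \<rho>)) (snd (spl \<rho>))" by (rule spl_props)
  obtain k where k: "k < fst (fst (spl \<rho>))" "k < fst (snd (spl \<rho>))"
    "(k \<in> snd (fst (snd (fst (spl \<rho>))))) \<noteq> (k \<in> snd (fst (snd (snd (spl \<rho>)))))"
    using sp unfolding splitP_def by blast
  show ?thesis
  proof (cases b)
    case True
    then have "\<not> b'" using assms(2) by simp
    then show ?thesis using True k unfolding child_def \<rho>_def[symmetric] by (intro exI[of _ k]) simp
  next
    case False
    then have "b'" using assms(2) by simp
    then show ?thesis using False k unfolding child_def \<rho>_def[symmetric] by (intro exI[of _ k]) auto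
  qed
qed

primrec br :: "(nat \<Rightarrow> bool) \<Rightarrow> nat \<Rightarrow> st" where
  "br \<alpha> 0 = (0, (\<lambda>_. 0, {}), {})"
| "br \<alpha> (Suc n) = child (\<alpha> n) n (br \<alpha> n)"

lemma good_br: "goodS (br \<alpha> n)"
proof (induction n)
  case 0
  have "cell 0 (\<lambda>_. 0, {}) = UNIV" by (simp add: cell_def agree_def)
  moreover have "KJ U {} = UNIV" by (simp add: KJ_def)
  ultimately show ?case using unc unfolding goodS_def cellS_def by simp
next
  case (Suc n)
  then show ?case using child_props by simp
qed

lemma br_step: "leS (br \<alpha> (Suc n)) (br \<alpha> n)" "n < fst (br \<alpha> (Suc n))"
   "cellS (br \<alpha> (Suc n)) \<subseteq> V n \<or> n \<in> snd (snd (br \<alpha> (Suc n)))"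
  using child_props[OF good_br[of \<alpha> n]] by simp_all

lemma br_mono: "n \<le> N \<Longrightarrow> leS (br \<alpha> N) (br \<alpha> n)"
proof (induction N rule: dec_induct)
  case base then show ?case by (rule leS_refl)
next
  case (step N) then show ?case using br_step(1) leS_trans by blast
qed

definition lim :: "(nat \<Rightarrow> bool) \<Rightarrow> pt" where
  "lim \<alpha> = (\<lambda>i. fst (fst (snd (br \<alpha> (Suc i)))) i, {i. i \<in> snd (fst (snd (br \<alpha> (Suc i))))})"

lemma lim_cell: "lim \<alpha> \<in> cellS (br \<alpha> n)"
  unfolding cellS_def cell_def agree_def
proof (intro CollectI allI impI)
  fix i assume i: "i < fst (br \<alpha> n)"
  show "fst (fst (snd (br \<alpha> n))) i = fst (lim \<alpha>) i \<and> (i \<in> snd (fst (snd (br \<alpha> n))) \<longleftrightarrow> i \<in> snd (lim \<alpha>))"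
  proof (cases "Suc i \<le> n")
    case True
    have l: "leS (br \<alpha> n) (br \<alpha> (Suc i))" using br_mono[OF True] .
    have "i < fst (br \<alpha> (Suc i))" by (rule br_step(2))
    then show ?thesis using l unfolding leS_def agree_def lim_def by auto
  next
    case False
    then have "n \<le> Suc i" by simp
    then have l: "leS (br \<alpha> (Suc i)) (br \<alpha> n)" by (rule br_mono)
    then show ?thesis using i unfolding leS_def agree_def lim_def by auto
  qed
qed

lemma lim_A: "lim \<alpha> \<in> A"
proof -
  have "lim \<alpha> \<notin> U n - V n" for n
  proof
    assume a: "lim \<alpha> \<in> U n - V n"
    have "lim \<alpha> \<in> cellS (br \<alpha> (Suc n))" by (rule lim_cell)
    then have nJ: "n \<in> snd (snd (br \<alpha> (Suc n)))" using br_step(3)[of \<alpha> n] a by blast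
    obtain M where M: "cell M (lim \<alpha>) \<subseteq> U n" using cU a unfolding cop_def by blast
    define N where "N = Suc (max n M)"
    have le: "leS (br \<alpha> N) (br \<alpha> (Suc n))" unfolding N_def by (rule br_mono) simp
    then have nJ': "n \<in> snd (snd (br \<alpha> N))" using nJ unfolding leS_def by blast
    have "max n M < fst (br \<alpha> N)" unfolding N_def by (rule br_step(2))
    then have MN: "M \<le> fst (br \<alpha> N)" by simp
    obtain z where z: "z \<in> A \<inter> KJ U (snd (snd (br \<alpha> N))) \<inter> cellS (br \<alpha> N)"
      using uncountable_nonempty good_br[of \<alpha> N] unfolding goodS_def by blast
    have "z \<notin> U n" using z nJ' unfolding KJ_def by blast
    moreover have "agree (fst (br \<alpha> N)) (fst (snd (br \<alpha> N))) z" using z unfolding cellS_def cell_def by blast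
    moreover have "agree (fst (br \<alpha> N)) (fst (snd (br \<alpha> N))) (lim \<alpha>)" using lim_cell[of \<alpha> N] unfolding cellS_def cell_def by blast
    ultimately have "agree (fst (br \<alpha> N)) (lim \<alpha>) z" by (meson agree_sym agree_trans)
    then have "agree M (lim \<alpha>) z" using MN by (rule agree_mono)
    then have "z \<in> U n" using M unfolding cell_def by blast
    then show False using \<open>z \<notin> U n\<close> by blast
  qed
  then show ?thesis using Aeq by blast
qed

lemma br_agree: "(\<And>i. i < n \<Longrightarrow> \<alpha> i = \<beta> i) \<Longrightarrow> br \<alpha> n = br \<beta> n"
  by (induction n) auto

lemma lim_inj: "\<alpha> \<noteq> \<beta> \<Longrightarrow> snd (lim \<alpha>) \<noteq> snd (lim \<beta>)"
proof -
  assume "\<alpha> \<noteq> \<beta>"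
  then have ex: "\<exists>n. \<alpha> n \<noteq> \<beta> n" by blast
  define n where "n = (LEAST n. \<alpha> n \<noteq> \<beta> n)"
  have n: "\<alpha> n \<noteq> \<beta> n" unfolding n_def using ex by (rule LeastI_ex)
  have "\<alpha> i = \<beta> i" if "i < n" for i using not_less_Least[OF that[unfolded n_def]] by simp
  then have eq: "br \<alpha> n = br \<beta> n" by (rule br_agree)
  obtain k where k: "k < fst (child (\<alpha> n) n (br \<alpha> n))" "k < fst (child (\<beta> n) n (br \<alpha> n))"
    "(k \<in> snd (fst (snd (child (\<alpha> n) n (br \<alpha> n))))) \<noteq> (k \<in> snd (fst (snd (child (\<beta> n) n (br \<alpha> n)))))"
    using child_sep[OF good_br n] by blast
  have "lim \<alpha> \<in> cellS (br \<alpha> (Suc n))" by (rule lim_cell)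
  then have 1: "k \<in> snd (lim \<alpha>) \<longleftrightarrow> k \<in> snd (fst (snd (child (\<alpha> n) n (br \<alpha> n))))"
    using k(1) unfolding cellS_def cell_def agree_def by auto
  have "lim \<beta> \<in> cellS (br \<beta> (Suc n))" by (rule lim_cell)
  then have 2: "k \<in> snd (lim \<beta>) \<longleftrightarrow> k \<in> snd (fst (snd (child (\<beta> n) n (br \<alpha> n))))"
    using k(2) eq unfolding cellS_def cell_def agree_def by auto
  show ?thesis using 1 2 k(3) by blast
qed

lemma perfect_main: "\<exists>f :: nat set \<Rightarrow> nat set. inj f \<and> range f \<subseteq> snd ` A"
proof (intro exI conjI)
  show "inj (\<lambda>S. snd (lim (\<lambda>i. i \<in> S)))"
  proof (rule injI)
    fix S T :: "nat set" assume "snd (lim (\<lambda>i. i \<in> S)) = snd (lim (\<lambda>i. i \<in> T))"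
    then have "(\<lambda>i. i \<in> S) = (\<lambda>i. i \<in> T)" using lim_inj by blast
    then show "S = T" by (metis Collect_mem_eq)
  qed
  show "range (\<lambda>S. snd (lim (\<lambda>i. i \<in> S))) \<subseteq> snd ` A" using lim_A by blast
qed

end


lemma topspace_Baire: "topspace Baire_space = UNIV"
  unfolding Baire_space_def by (simp add: PiE_UNIV_domain)

lemma topspace_Pomega: "topspace Pomega = UNIV"
proof -
  have "UNIV \<in> {{A. F \<subseteq> A} | F::nat set. finite F}" by (rule CollectI, rule exI[of _ "{}"]) simp
  then show ?thesis unfolding Pomega_def topology_generated_by_topspace by blast
qed

theorem proposition3p5:
  fixes X :: "'a topology"
  assumes "CB0_Sigma11 X"
    and "uncountable (topspace X)"
  shows "topspace X \<approx> (UNIV :: real set)"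
proof -
  obtain S where S: "S \<subseteq> topspace Pomega" "S \<in> Sigma11 Pomega" "X homeomorphic_space subtopology Pomega S"
    using assms(1) unfolding CB0_Sigma11_def by blast
  obtain A U V where AUV: "A \<subseteq> topspace Baire_space \<times> topspace Pomega"
    "\<forall>n::nat. openin (prod_topology Baire_space Pomega) (U n) \<and> openin (prod_topology Baire_space Pomega) (V n)"
    "(topspace Baire_space \<times> topspace Pomega) - A = (\<Union>n. U n - V n)"
    "S = {y \<in> topspace Pomega. \<exists>p \<in> topspace Baire_space. (p, y) \<in> A}"
    using S(2) unfolding Sigma11_def by blast
  have "UNIV - A = (\<Union>n. U n - V n)" using AUV(3) by (simp add: topspace_Baire topspace_Pomega)
  then have Aeq: "A = - (\<Union>n. U n - V n)" by blast
  have Seq: "S = snd ` A"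
  proof
    show "S \<subseteq> snd ` A"
    proof
      fix y assume "y \<in> S"
      then obtain p where "(p,y) \<in> A" using AUV(4) by blast
      then show "y \<in> snd ` A" by (rule rev_image_eqI) simp
    qed
    show "snd ` A \<subseteq> S"
    proof
      fix y assume "y \<in> snd ` A"
      then obtain x where x: "x \<in> A" "y = snd x" by blast
      then have "(fst x, y) \<in> A" by simp
      then have "\<exists>p. (p, y) \<in> A" by blast
      then show "y \<in> S" using AUV(4) by (simp add: topspace_Baire topspace_Pomega)
    qed
  qed
  obtain f g where fg: "homeomorphic_maps X (subtopology Pomega S) f g"
    using S(3) unfolding homeomorphic_space_def by blast
  have tS: "topspace (subtopology Pomega S) = S" using S(1) by (simp add: Int_absorb1)
  have "f ` topspace X \<subseteq> S" "g ` S \<subseteq> topspace X"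
    using fg continuous_map_image_subset_topspace tS unfolding homeomorphic_maps_def by metis+
  moreover have "\<forall>x\<in>topspace X. g (f x) = x" "\<forall>y\<in>S. f (g y) = y"
    using fg tS unfolding homeomorphic_maps_def by auto
  ultimately have XS: "topspace X \<approx> S" unfolding eqpoll_iff_bijections by blast
  have "uncountable S"
  proof
    assume "countable S"
    obtain h where "bij_betw h (topspace X) S" using XS unfolding eqpoll_def by blast
    then have "countable (topspace X)" using \<open>countable S\<close> countable_iff_bij by blast
    then show False using assms(2) by simp
  qed
  interpret P: perf U V A
  proof
    show "cop (U n)" for n using AUV(2) prod_open_cop by blast
    show "cop (V n)" for n using AUV(2) prod_open_cop by blast
    show "A = - (\<Union>n. U n - V n)" by (rule Aeq)
    show "uncountable (snd ` A)" using \<open>uncountable S\<close> Seq by simp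
  qed
  obtain h :: "nat set \<Rightarrow> nat set" where h: "inj h" "range h \<subseteq> snd ` A" using P.perfect_main by blast
  have l1: "(UNIV :: nat set set) \<lesssim> S" unfolding lepoll_def using h Seq by blast
  have l2: "S \<lesssim> (UNIV :: nat set set)" by (rule subset_imp_lepoll) simp
  from l2 l1 have "S \<approx> (UNIV :: nat set set)" by (rule lepoll_antisym)
  then have "topspace X \<approx> (UNIV :: nat set set)" using XS eqpoll_trans by blast
  then show ?thesis using nat_sets_eqpoll_reals eqpoll_trans by blast
qed

end
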